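(* Let $R$ be a skew field. For $a_1,a_2,a_3,a_4\in R^*$ put $A_i=a_ia_{i+1}a_{i+2}a_{i+3}$ (indices mod $4$) and assume $1+A_i\neq0$ for all $i$. Define $\mu(a_1,a_2,a_3,a_4)=(b_1,b_2,b_3,b_4)$ by $$b_1=(1+A_3^{-1})a_3,\quad b_2=(1+A_4)^{-1}a_4,\quad b_3=(1+A_1^{-1})a_1,\quad b_4=(1+A_2)^{-1}a_2.$$ Then the square of this two by two transformation is the identity, in the sense that $\mu(b_2,b_3,b_4,b_1)=(a_2,a_3,a_4,a_1)$.
   Context: The transformation $\mu$ describes the change of $\mathcal A$-coordinates $a_i$ on the four internal edges of a bipartite ribbon graph under a two by two move; the relabeling $(b_2,b_3,b_4,b_1)$ corresponds to the rotation of the picture identifying the new graph with the old one. *)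

theory Defs
  imports Main
begin

definition mu :: "'a::division_ring \<times> 'a \<times> 'a \<times> 'a \<Rightarrow> 'a \<times> 'a \<times> 'a \<times> 'a" where
  "mu = (\<lambda>(a1, a2, a3, a4).
     (let A1 = a1 * a2 * a3 * a4;
          A2 = a2 * a3 * a4 * a1;
          A3 = a3 * a4 * a1 * a2;
          A4 = a4 * a1 * a2 * a3
      in ((1 + inverse A3) * a3,
          inverse (1 + A4) * a4,
          (1 + inverse A1) * a1,
          inverse (1 + A2) * a2)))"

end

theory Submission
  imports Defs
begin

lemma cancel1: "(x::'a::division_ring) \<noteq> 0 \<Longrightarrow> inverse x * (x * y) = y"
  by (simp add: mult.assoc[symmetric])
lemma cancel2: "(x::'a::division_ring) \<noteq> 0 \<Longrightarrow> x * (inverse x * y) = y"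
  by (simp add: mult.assoc[symmetric])
lemma invm: "(x::'a::division_ring) \<noteq> 0 \<Longrightarrow> y \<noteq> 0 \<Longrightarrow> inverse (x * y) = inverse y * inverse x"
  by (simp add: nonzero_inverse_mult_distrib)

lemma conj_inv: "(A::'a::division_ring) \<noteq> 0 \<Longrightarrow> 1 + A \<noteq> 0 \<Longrightarrow>
   inverse (1 + A) * (inverse A * (1 + A)) = inverse A"
proof -
  assume a: "A \<noteq> 0" "1 + A \<noteq> 0"
  have "inverse A * (1 + A) = (1 + A) * inverse A"
    using a by (simp add: distrib_left distrib_right)
  then show ?thesis using a by (simp add: cancel1)
qed

lemma one_inv_nz: "(A::'a::division_ring) \<noteq> 0 \<Longrightarrow> 1 + A \<noteq> 0 \<Longrightarrow> 1 + inverse A \<noteq> 0"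
proof -
  assume a: "A \<noteq> 0" "1 + A \<noteq> 0"
  have "1 + inverse A = inverse A * (1 + A)" using a by (simp add: distrib_left)
  then show ?thesis using a by simp
qed

theorem lemma4p3:
  fixes a1 a2 a3 a4 b1 b2 b3 b4 :: "'a::division_ring"
  assumes "a1 \<noteq> 0" "a2 \<noteq> 0" "a3 \<noteq> 0" "a4 \<noteq> 0"
    and "1 + a1 * a2 * a3 * a4 \<noteq> 0"
    and "1 + a2 * a3 * a4 * a1 \<noteq> 0"
    and "1 + a3 * a4 * a1 * a2 \<noteq> 0"
    and "1 + a4 * a1 * a2 * a3 \<noteq> 0"
    and "mu (a1, a2, a3, a4) = (b1, b2, b3, b4)"
  shows "mu (b2, b3, b4, b1) = (a2, a3, a4, a1)"
proof -
  note nz = assms(1-4)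
  define A1 where "A1 = a1 * a2 * a3 * a4"
  define A2 where "A2 = a2 * a3 * a4 * a1"
  define A3 where "A3 = a3 * a4 * a1 * a2"
  define A4 where "A4 = a4 * a1 * a2 * a3"
  have p1: "1 + A1 \<noteq> 0" and p2: "1 + A2 \<noteq> 0" and p3: "1 + A3 \<noteq> 0" and p4: "1 + A4 \<noteq> 0"
    using assms(5-8) by (simp_all add: A1_def A2_def A3_def A4_def)
  have n1: "A1 \<noteq> 0" and n2: "A2 \<noteq> 0" and n3: "A3 \<noteq> 0" and n4: "A4 \<noteq> 0"
    using nz by (simp_all add: A1_def A2_def A3_def A4_def)
  have B: "b1 = (1 + inverse A3) * a3" "b2 = inverse (1 + A4) * a4"
          "b3 = (1 + inverse A1) * a1" "b4 = inverse (1 + A2) * a2"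
    using assms(9) by (simp_all add: mu_def A1_def A2_def A3_def A4_def Let_def)
  have b3': "b3 = inverse (a2*a3*a4) * (1 + A2)"
    using nz by (simp add: B A1_def A2_def distrib_left distrib_right invm mult.assoc cancel1 cancel2)
  have b1': "b1 = inverse (a4*a1*a2) * (1 + A4)"
    using nz by (simp add: B A3_def A4_def distrib_left distrib_right invm mult.assoc cancel1 cancel2)
  have b4b1: "b4 * b1 = inverse (1 + A2) * (inverse (a4*a1) * (1 + A4))"
    using nz by (simp add: B(4) b1' invm mult.assoc cancel1 cancel2)
  have b2b3: "b2 * b3 = inverse (1 + A4) * (inverse (a2*a3) * (1 + A2))"
    using nz by (simp add: B(2) b3' invm mult.assoc cancel1 cancel2)
  have iA2: "inverse (a4*a1) * inverse (a2*a3) = inverse A2"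
    using nz by (simp add: A2_def invm mult.assoc)
  have iA4: "inverse (a2*a3) * inverse (a4*a1) = inverse A4"
    using nz by (simp add: A4_def invm mult.assoc)
  have C3: "b4 * b1 * b2 * b3 = inverse A2"
  proof -
    have "b4 * b1 * b2 * b3 = (b4 * b1) * (b2 * b3)" by (simp add: mult.assoc)
    also have "\<dots> = inverse (1 + A2) * ((inverse (a4*a1) * inverse (a2*a3)) * (1 + A2))"
      using p4 by (simp add: b4b1 b2b3 mult.assoc cancel2)
    also have "\<dots> = inverse A2" using iA2 conj_inv[OF n2 p2] by simp
    finally show ?thesis .
  qed
  have C1: "b2 * b3 * b4 * b1 = inverse A4"
  proof -
    have "b2 * b3 * b4 * b1 = (b2 * b3) * (b4 * b1)" by (simp add: mult.assoc)
    also have "\<dots> = inverse (1 + A4) * ((inverse (a2*a3) * inverse (a4*a1)) * (1 + A4))"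
      using p2 by (simp add: b4b1 b2b3 mult.assoc cancel2)
    also have "\<dots> = inverse A4" using iA4 conj_inv[OF n4 p4] by simp
    finally show ?thesis .
  qed
  have C4: "b1 * b2 * b3 * b4 = inverse A3"
    using nz p2 p4 by (simp add: b1' B(2) b3' B(4) A3_def invm mult.assoc cancel1 cancel2)
  have C2: "b3 * b4 * b1 * b2 = inverse A1"
    using nz p2 p4 by (simp add: b1' B(2) b3' B(4) A1_def invm mult.assoc cancel1 cancel2)
  have q3: "1 + inverse A3 \<noteq> 0" by (rule one_inv_nz[OF n3 p3])
  have q1: "1 + inverse A1 \<noteq> 0" by (rule one_inv_nz[OF n1 p1])
  show ?thesis
    unfolding mu_def Let_def
    using C1 C2 C3 C4 p2 p4 q1 q3
    by (simp add: B mult.assoc[symmetric])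
qed

end
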